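(* Let $n\ge1$, let $\Theta$ be a nonzero complex skew-symmetric $n\times n$ matrix, and let $\Gamma$ be a discrete subgroup of $\mathrm{Aut}(\mathcal H,J_\Theta)$. Suppose there is $\phi\in\Gamma$ of the form $\phi(z)=(tz^0+is,\ t^{1/2}Az')$ with $0<t<1$, $s\in\mathbb R$, $A\in U_\Theta$. Then every $\psi\in\Gamma$ is of the form $\psi(z)=(az^0+ib,\ a^{1/2}Bz')$ with $a>0$, $b\in\mathbb R$, $B\in U_\Theta$ (i.e. with $w'=0$ in the normal form below), and $b(1-t)=s(1-a)$; in particular $\frac{b}{1-a}=\frac{s}{1-t}$ whenever $a\neq1$.
   Context: Write points of $\mathbb C^{n+1}$ as $z=(z^0,z')$, $z'=(z^1,\dots,z^n)$. $\mathcal H=\{(z^0,z')\in\mathbb C\times\mathbb C^n:\ \mathrm{Re}\,z^0+\|z'\|^2<0\}$ (Siegel half space). For a complex skew-symmetric $n\times n$ matrix $\Theta=(\Theta_{\alpha\beta})$, $J_\Theta$ is the almost complex structure on $\mathbb C^{n+1}$ $J_\Theta=i\frac{\partial}{\partial z^0}\otimes dz^0+\sum_\alpha\big(i\frac{\partial}{\partial z^\alpha}+2\sum_\beta\Theta_{\alpha\beta}z^\beta\frac{\partial}{\partial \bar z^0}\big)\otimes dz^\alpha-i\frac{\partial}{\partial \bar z^0}\otimes d\bar z^0+\sum_\alpha\big(-i\frac{\partial}{\partial \bar z^\alpha}+2\sum_\beta\overline{\Theta_{\alpha\beta}}\bar z^\beta\frac{\partial}{\partial z^0}\big)\otimes d\bar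 z^\alpha$ (integrable iff $\Theta=0$). $\mathrm{Aut}(\mathcal H,J_\Theta)$ is the group of $J_\Theta$-holomorphic diffeomorphisms of $\mathcal H$ with compact-open topology. $U_\Theta=\{A\in\mathbb C^{n\times n}: A^t\bar A=I,\ A^t\Theta A=\Theta\}$, a compact group. For $w'\in\mathbb C^n$, $h_{w'}(z')=-\|w'\|^2-2\langle z',\bar w'\rangle+i\big(\sum\Theta_{\alpha\beta}z^\alpha w^\beta+\sum\overline{\Theta_{\alpha\beta}}\,\bar z^\alpha\bar w^\beta\big)$, where $\langle z',\bar w'\rangle=\sum_\alpha z^\alpha\bar w^\alpha$. It is known (and may be assumed) that for $\Theta\neq0$ every $\phi\in\mathrm{Aut}(\mathcal H,J_\Theta)$ can be written uniquely as $\phi(z)=(tz^0+h_{w'}(z')+is,\ t^{1/2}Az'+w')$ with $t>0$, $s\in\mathbb R$, $w'\in\mathbb C^n$, $A\in U_\Theta$, and every such map is an automorphism. *)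

theory Defs
  imports "HOL-Analysis.Analysis"
begin

text \<open>Points of C^(n+1) are pairs (z0, z') with z' :: complex^'n, 'n a finite index type
  of cardinality n (n >= 1 automatically).\<close>

definition siegel :: "(complex \<times> (complex^'n)) set" where
  "siegel = {(z0, z'). Re z0 + (norm z')\<^sup>2 < 0}"

definition skew_sym :: "complex^'n^'n \<Rightarrow> bool" where
  "skew_sym \<Theta> \<longleftrightarrow> transpose \<Theta> = - \<Theta>"

definition cnj_mat :: "complex^'n^'n \<Rightarrow> complex^'n^'n" where
  "cnj_mat A = (\<chi> i j. cnj (A $ i $ j))"

definition U_Theta :: "complex^'n^'n \<Rightarrow> (complex^'n^'n) set" where
  "U_Theta \<Theta> = {A. transpose A ** cnj_mat A = mat 1 \<and> transpose A ** \<Theta> ** A = \<Theta>}"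

definition h_w :: "complex^'n^'n \<Rightarrow> complex^'n \<Rightarrow> complex^'n \<Rightarrow> complex" where
  "h_w \<Theta> w z = - complex_of_real ((norm w)\<^sup>2)
     - 2 * (\<Sum>\<alpha>\<in>UNIV. z $ \<alpha> * cnj (w $ \<alpha>))
     + \<i> * ((\<Sum>\<alpha>\<in>UNIV. \<Sum>\<beta>\<in>UNIV. \<Theta> $ \<alpha> $ \<beta> * z $ \<alpha> * w $ \<beta>)
          + (\<Sum>\<alpha>\<in>UNIV. \<Sum>\<beta>\<in>UNIV. cnj (\<Theta> $ \<alpha> $ \<beta>) * cnj (z $ \<alpha>) * cnj (w $ \<beta>)))"

definition autmap :: "complex^'n^'n \<Rightarrow> real \<Rightarrow> real \<Rightarrow> complex^'n \<Rightarrow> complex^'n^'n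
    \<Rightarrow> complex \<times> (complex^'n) \<Rightarrow> complex \<times> (complex^'n)" where
  "autmap \<Theta> t s w A = (\<lambda>(z0, z'). (complex_of_real t * z0 + h_w \<Theta> w z' + \<i> * complex_of_real s,
                               complex_of_real (sqrt t) *s (A *v z') + w))"

text \<open>Aut(H, J_Theta) for Theta nonzero, via the (assumed) normal form theorem.\<close>
definition Aut :: "complex^'n^'n \<Rightarrow> (complex \<times> (complex^'n) \<Rightarrow> complex \<times> (complex^'n)) set" where
  "Aut \<Theta> = {autmap \<Theta> t s w A | t s w A. t > 0 \<and> A \<in> U_Theta \<Theta>}"

definition is_subgroup_Aut :: "complex^'n^'n \<Rightarrow> (complex \<times> (complex^'n) \<Rightarrow> complex \<times> (complex^'n)) set \<Rightarrow> bool" where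
  "is_subgroup_Aut \<Theta> \<Gamma> \<longleftrightarrow> \<Gamma> \<subseteq> Aut \<Theta> \<and> id \<in> \<Gamma> \<and>
     (\<forall>f\<in>\<Gamma>. \<forall>g\<in>\<Gamma>. f \<circ> g \<in> \<Gamma>) \<and> (\<forall>f\<in>\<Gamma>. inv f \<in> \<Gamma>)"

text \<open>Discreteness in the compact-open topology on maps of H: every element gamma has a basic
  compact-open neighbourhood (finite intersection of sets {f. f ` K \<subseteq> U}, K \<subseteq> H compact,
  U open) meeting Gamma only in maps equal to gamma on H.\<close>
definition co_discrete :: "('a::topological_space) set \<Rightarrow> ('a \<Rightarrow> 'b::topological_space) set \<Rightarrow> bool" where
  "co_discrete H \<Gamma> \<longleftrightarrow> (\<forall>\<gamma>\<in>\<Gamma>. \<exists>P. finite P \<and>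
      (\<forall>(K, U)\<in>P. compact K \<and> K \<subseteq> H \<and> open U \<and> \<gamma> ` K \<subseteq> U) \<and>
      (\<forall>\<psi>\<in>\<Gamma>. (\<forall>(K, U)\<in>P. \<psi> ` K \<subseteq> U) \<longrightarrow> (\<forall>x\<in>H. \<psi> x = \<gamma> x)))"

end

theory Submission
  imports Defs
begin



lemma ofreal_smult: "complex_of_real c *s (v::complex^'n) = c *\<^sub>R v"
  by (simp add: vec_eq_iff) (simp add: scaleR_conv_of_real)

lemma mv_scaleR: "(M::complex^'n^'m) *v (c *\<^sub>R v) = c *\<^sub>R (M *v v)"
  by (simp add: vec_eq_iff matrix_vector_mult_def) (simp add: scaleR_conv_of_real sum_distrib_left mult.left_commute)

definition cip :: "complex^'n \<Rightarrow> complex^'n \<Rightarrow> complex" where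
  "cip x y = (\<Sum>i\<in>UNIV. x$i * cnj (y$i))"

lemma norm_sq_cip: "complex_of_real ((norm x)\<^sup>2) = cip x x"
proof -
  have "(norm x)\<^sup>2 = (\<Sum>i\<in>UNIV. (norm (x$i))\<^sup>2)"
    unfolding norm_vec_def L2_set_def by (simp add: sum_nonneg)
  then show ?thesis unfolding cip_def by (simp only: of_real_sum complex_norm_square)
qed

definition Ast :: "complex^'n^'n \<Rightarrow> complex^'n^'n" where
  "Ast A = cnj_mat (transpose A)"

lemma unit_entries:
  assumes "transpose A ** cnj_mat A = mat 1"
  shows "(\<Sum>i\<in>UNIV. A$i$j * cnj (A$i$k)) = (if j = k then 1 else 0)"
  using arg_cong[OF assms, of "\<lambda>M. M$j$k"]
  by (simp add: matrix_matrix_mult_def transpose_def cnj_mat_def mat_def)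

lemma unit_norm:
  assumes "transpose A ** cnj_mat A = mat 1"
  shows "norm (A *v v) = norm v"
proof -
  have "cip (A *v v) (A *v v) = (\<Sum>i\<in>UNIV. \<Sum>j\<in>UNIV. \<Sum>k\<in>UNIV. v$j * cnj (v$k) * (A$i$j * cnj (A$i$k)))"
    by (simp add: cip_def matrix_vector_mult_def sum_product mult.commute mult.left_commute)
  also have "\<dots> = (\<Sum>j\<in>UNIV. \<Sum>k\<in>UNIV. v$j * cnj (v$k) * (\<Sum>i\<in>UNIV. A$i$j * cnj (A$i$k)))"
  proof -
    define F where "F i j k = v$j * cnj (v$k) * (A$i$j * cnj (A$i$k))" for i j k
    have "(\<Sum>i\<in>UNIV. \<Sum>j\<in>UNIV. \<Sum>k\<in>UNIV. F i j k) = (\<Sum>j\<in>UNIV. \<Sum>i\<in>UNIV. \<Sum>k\<in>UNIV. F i j k)"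
      by (rule sum.swap)
    also have "\<dots> = (\<Sum>j\<in>UNIV. \<Sum>k\<in>UNIV. \<Sum>i\<in>UNIV. F i j k)"
      by (rule sum.cong[OF refl], rule sum.swap)
    finally show ?thesis by (simp add: F_def sum_distrib_left)
  qed
  also have "\<dots> = cip v v"
    by (simp add: unit_entries[OF assms] cip_def if_distrib cong: if_cong)
  finally have "(norm (A *v v))\<^sup>2 = (norm v)\<^sup>2"
    by (metis norm_sq_cip of_real_eq_iff)
  then show ?thesis by (simp add: power2_eq_iff_nonneg)
qed

lemma Ast_left:
  assumes "transpose A ** cnj_mat A = mat 1"
  shows "Ast A ** A = mat 1"
proof -
  have "cnj_mat (transpose A ** cnj_mat A) = Ast A ** A"
    by (simp add: Ast_def cnj_mat_def matrix_matrix_mult_def transpose_def vec_eq_iff)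
  moreover have "cnj_mat (mat 1 :: complex^'n^'n) = mat 1"
    by (simp add: cnj_mat_def mat_def vec_eq_iff)
  ultimately show ?thesis using assms by metis
qed

lemma Ast_right:
  assumes "transpose A ** cnj_mat A = mat 1"
  shows "A ** Ast A = mat 1"
  using Ast_left[OF assms] matrix_left_right_inverse by blast

lemma Ast_norm:
  assumes "transpose A ** cnj_mat A = mat 1"
  shows "norm (Ast A *v v) = norm v"
proof -
  have "norm (A *v (Ast A *v v)) = norm v"
    by (simp add: matrix_vector_mul_assoc Ast_right[OF assms])
  then show ?thesis using unit_norm[OF assms] by simp
qed



definition lh :: "complex^'n^'n \<Rightarrow> complex^'n \<Rightarrow> complex^'n \<Rightarrow> complex" where
  "lh \<Theta> w z = h_w \<Theta> w z + complex_of_real ((norm w)\<^sup>2)"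

lemma h_w_zero_w: "h_w \<Theta> 0 z = 0"
  by (simp add: h_w_def)

lemma h_w_zero_z: "h_w \<Theta> w 0 = - complex_of_real ((norm w)\<^sup>2)"
  by (simp add: h_w_def)

lemma h_w_lh: "h_w \<Theta> w z = lh \<Theta> w z - complex_of_real ((norm w)\<^sup>2)"
  by (simp add: lh_def)

lemma lh_diff: "lh \<Theta> w (x - y) = lh \<Theta> w x - lh \<Theta> w y"
  by (simp add: lh_def h_w_def algebra_simps sum_subtractf)

lemma lh_scale: "lh \<Theta> w (c *\<^sub>R x) = complex_of_real c * lh \<Theta> w x"
  by (simp add: lh_def h_w_def) (simp add: scaleR_conv_of_real sum_distrib_left algebra_simps)

lemma norm_vec_le_sum: "norm (x::'a::real_normed_vector^'n) \<le> (\<Sum>i\<in>UNIV. norm (x$i))"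
  by (simp add: norm_vec_def L2_set_le_sum)

lemma tri3: "norm (- 2 * (X::complex) + \<i> * (Y + Z)) \<le> 2 * norm X + (norm Y + norm Z)"
proof -
  have "norm (-2*X + \<i>*(Y+Z)) \<le> norm (-2*X) + norm (\<i>*(Y+Z))" by (rule norm_triangle_ineq)
  moreover have "norm (-2*X) = 2*norm X" by (simp add: norm_mult)
  moreover have "norm (\<i>*(Y+Z)) \<le> norm Y + norm Z" by (simp add: norm_mult norm_triangle_ineq)
  ultimately show ?thesis by linarith
qed

lemma entry_le: "norm ((M::'a::real_normed_vector^'n^'m)$i$j) \<le> norm M"
  using order_trans[OF Finite_Cartesian_Product.norm_nth_le Finite_Cartesian_Product.norm_nth_le] .

lemma lh_bound: fixes \<Theta> :: "complex^'n^'n" shows "\<exists>C\<ge>0. \<forall>y. norm (lh \<Theta> w y) \<le> C * norm y"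
proof -
  define S where "S = (\<Sum>a\<in>UNIV. \<Sum>b\<in>UNIV. norm (\<Theta>$a$b))"
  have S0: "S \<ge> 0" unfolding S_def by (simp add: sum_nonneg)
  define C where "C = (2 * real CARD('n) + 2 * S) * norm w"
  have "norm (lh \<Theta> w y) \<le> C * norm y" for y
  proof -
    have e1: "norm (\<Sum>a\<in>UNIV. y$a * cnj (w$a)) \<le> real CARD('n) * (norm y * norm w)"
    proof -
      have "norm (\<Sum>a\<in>UNIV. y$a * cnj (w$a)) \<le> (\<Sum>a\<in>(UNIV::'n set). norm y * norm w)"
        apply (rule order_trans[OF norm_sum])
        apply (rule sum_mono)
        apply (simp add: norm_mult)
        apply (intro mult_mono norm_ge_zero)
         apply (metis Finite_Cartesian_Product.norm_nth_le)+
        done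
      then show ?thesis by simp
    qed
    have e2: "norm (\<Sum>a\<in>UNIV. \<Sum>b\<in>UNIV. \<Theta>$a$b * y$a * w$b) \<le> S * (norm y * norm w)"
    proof -
      have "norm (\<Sum>a\<in>UNIV. \<Sum>b\<in>UNIV. \<Theta>$a$b * y$a * w$b) \<le> (\<Sum>a\<in>UNIV. \<Sum>b\<in>UNIV. norm (\<Theta>$a$b) * (norm y * norm w))"
        apply (rule order_trans[OF norm_sum sum_mono])
        apply (rule order_trans[OF norm_sum sum_mono])
        apply (simp add: norm_mult mult.assoc)
        apply (intro mult_left_mono mult_mono norm_ge_zero Finite_Cartesian_Product.norm_nth_le)
        done
      then show ?thesis by (simp add: S_def sum_distrib_right)
    qed
    have e3: "norm (\<Sum>a\<in>UNIV. \<Sum>b\<in>UNIV. cnj (\<Theta>$a$b) * cnj (y$a) * cnj (w$b)) \<le> S * (norm y * norm w)"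
    proof -
      have "norm (\<Sum>a\<in>UNIV. \<Sum>b\<in>UNIV. cnj (\<Theta>$a$b) * cnj (y$a) * cnj (w$b)) \<le> (\<Sum>a\<in>UNIV. \<Sum>b\<in>UNIV. norm (\<Theta>$a$b) * (norm y * norm w))"
        apply (rule order_trans[OF norm_sum sum_mono])
        apply (rule order_trans[OF norm_sum sum_mono])
        apply (simp add: norm_mult mult.assoc)
        apply (intro mult_left_mono mult_mono norm_ge_zero Finite_Cartesian_Product.norm_nth_le)
        done
      then show ?thesis by (simp add: S_def sum_distrib_right)
    qed
    have eq: "lh \<Theta> w y = - 2 * (\<Sum>a\<in>UNIV. y$a * cnj (w$a)) + \<i> * ((\<Sum>a\<in>UNIV. \<Sum>b\<in>UNIV. \<Theta>$a$b * y$a * w$b)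
          + (\<Sum>a\<in>UNIV. \<Sum>b\<in>UNIV. cnj (\<Theta>$a$b) * cnj (y$a) * cnj (w$b)))"
      by (simp add: lh_def h_w_def)
    have t3: "norm (lh \<Theta> w y) \<le> 2 * norm (\<Sum>a\<in>UNIV. y$a * cnj (w$a)) + (norm (\<Sum>a\<in>UNIV. \<Sum>b\<in>UNIV. \<Theta>$a$b * y$a * w$b)
          + norm (\<Sum>a\<in>UNIV. \<Sum>b\<in>UNIV. cnj (\<Theta>$a$b) * cnj (y$a) * cnj (w$b)))"
      unfolding eq by (rule tri3)
    have "norm (lh \<Theta> w y) \<le> 2 * (real CARD('n) * (norm y * norm w)) + (S * (norm y * norm w) + S * (norm y * norm w))"
      using t3 e1 e2 e3 by linarith
    moreover have "2 * (real CARD('n) * (norm y * norm w)) + (S * (norm y * norm w) + S * (norm y * norm w)) = C * norm y"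
      by (simp add: C_def algebra_simps)
    ultimately show ?thesis by simp
  qed
  moreover have "C \<ge> 0" unfolding C_def using S0 by simp
  ultimately show ?thesis by blast
qed

lemma mv_norm_le: "norm ((M::complex^'n^'m) *v v) \<le> real (CARD('n) * CARD('m)) * norm M * norm v"
proof -
  have c: "norm ((M *v v)$i) \<le> real CARD('n) * (norm M * norm v)" for i
  proof -
    have "norm ((M *v v)$i) \<le> (\<Sum>j\<in>(UNIV::'n set). norm M * norm v)"
      unfolding matrix_vector_mult_def
      unfolding matrix_vector_mult_def vec_lambda_beta
      apply (rule order_trans[OF norm_sum])
      apply (rule sum_mono)
      apply (simp only: norm_mult)
      apply (rule mult_mono)
      apply (rule entry_le)
      apply (rule Finite_Cartesian_Product.norm_nth_le)
      apply simp_all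
      done
    then show ?thesis by simp
  qed
  have "norm (M *v v) \<le> (\<Sum>i\<in>(UNIV::'m set). real CARD('n) * (norm M * norm v))"
    by (rule order_trans[OF norm_vec_le_sum sum_mono]) (rule c)
  then show ?thesis by (simp add: algebra_simps)
qed

lemma isom_entries_bound:
  assumes "\<And>v. norm ((M::complex^'n^'n) *v v) = norm v"
  shows "norm M \<le> real (CARD('n) * CARD('n))"
proof -
  have e: "norm (M$i$j) \<le> 1" for i j
  proof -
    have "(M *v axis j 1)$i = M$i$j"
      by (simp add: matrix_vector_mult_def axis_def if_distrib cong: if_cong)
    moreover have "norm (axis j (1::complex)) = 1"
    proof -
      have "(\<lambda>i. (norm (axis j (1::complex) $ i))\<^sup>2) = (\<lambda>i. if i = j then 1 else 0)"
        by (auto simp: axis_def)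
      then have "norm (axis j (1::complex)) = sqrt (\<Sum>i\<in>UNIV. (if i = j then 1 else 0))"
        by (simp only: norm_vec_def L2_set_def)
      then show ?thesis by simp
    qed
    ultimately show ?thesis using Finite_Cartesian_Product.norm_nth_le assms by metis
  qed
  have r: "norm (M$i) \<le> real CARD('n)" for i
  proof -
    have "norm (M$i) \<le> (\<Sum>j\<in>(UNIV::'n set). 1)"
      by (rule order_trans[OF norm_vec_le_sum]) (rule sum_mono, rule e)
    then show ?thesis by simp
  qed
  have "norm M \<le> (\<Sum>i\<in>(UNIV::'n set). real CARD('n))"
    by (rule order_trans[OF norm_vec_le_sum sum_mono]) (rule r)
  then show ?thesis by simp
qed



lemma autmap_eq: "autmap \<Theta> t s w A (z0, z') =
   (complex_of_real t * z0 + h_w \<Theta> w z' + \<i> * complex_of_real s, sqrt t *\<^sub>R (A *v z') + w)"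
  by (simp add: autmap_def ofreal_smult)

lemma U_unit: "A \<in> U_Theta \<Theta> \<Longrightarrow> transpose A ** cnj_mat A = mat 1"
  by (simp add: U_Theta_def)

lemma autmap_surj:
  assumes "t > 0" "transpose A ** cnj_mat A = mat 1"
  shows "surj (autmap \<Theta> t s w A)"
proof -
  have "\<exists>z. autmap \<Theta> t s w A z = (y0, y')" for y0 y'
  proof -
    define z' where "z' = (1 / sqrt t) *\<^sub>R (Ast A *v (y' - w))"
    define z0 where "z0 = (y0 - h_w \<Theta> w z' - \<i> * complex_of_real s) / complex_of_real t"
    have "A *v z' = (1 / sqrt t) *\<^sub>R (y' - w)"
      by (simp add: z'_def mv_scaleR matrix_vector_mul_assoc Ast_right[OF assms(2)])
    then have "autmap \<Theta> t s w A (z0, z') = (y0, y')"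
      using assms(1) by (simp add: autmap_eq z0_def)
    then show ?thesis by blast
  qed
  then show ?thesis by (metis surj_def surj_pair)
qed

fun mpow :: "complex^'n^'n \<Rightarrow> nat \<Rightarrow> complex^'n^'n" where
  "mpow A 0 = mat 1" | "mpow A (Suc m) = A ** mpow A m"

lemma mpow_isom:
  assumes "\<And>v. norm (A *v v) = norm v"
  shows "norm (mpow A m *v v) = norm v"
  by (induction m) (simp_all add: assms flip: matrix_vector_mul_assoc)

definition sig :: "real \<Rightarrow> real \<Rightarrow> nat \<Rightarrow> real" where
  "sig t s m = s * (1 - t^m) / (1 - t)"

definition Pm :: "real \<Rightarrow> real \<Rightarrow> complex^'n^'n \<Rightarrow> nat \<Rightarrow> complex \<times> (complex^'n) \<Rightarrow> complex \<times> (complex^'n)" where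
  "Pm t s A m = (\<lambda>(z0, z'). (complex_of_real (t^m) * z0 + \<i> * complex_of_real (sig t s m),
                            sqrt t ^ m *\<^sub>R (mpow A m *v z')))"

definition Qm :: "real \<Rightarrow> real \<Rightarrow> complex^'n^'n \<Rightarrow> nat \<Rightarrow> complex \<times> (complex^'n) \<Rightarrow> complex \<times> (complex^'n)" where
  "Qm t s A m = (\<lambda>(z0, z'). ((z0 - \<i> * complex_of_real (sig t s m)) / complex_of_real (t^m),
                            (1 / sqrt t) ^ m *\<^sub>R (mpow (Ast A) m *v z')))"

lemma sig_0 [simp]: "sig t s 0 = 0"
  by (simp add: sig_def)

lemma sig_Suc: "t \<noteq> 1 \<Longrightarrow> sig t s (Suc m) = t * sig t s m + s"
  by (simp add: sig_def field_simps)

lemma sig_Suc': "t \<noteq> 1 \<Longrightarrow> sig t s (Suc m) = sig t s m + s * t^m"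
  by (simp add: sig_def field_simps)

lemma phi_pow:
  fixes A :: "complex^'n^'n"
  assumes "t \<noteq> 1" "t > 0"
  shows "(autmap \<Theta> t s 0 A) ^^ m = Pm t s A m"
proof (induction m)
  case 0
  show ?case by (simp add: Pm_def sig_def fun_eq_iff)
next
  case (Suc m)
  show ?case
  proof (rule ext, clarify)
    fix z0 and z' :: "complex^'n"
    show "(autmap \<Theta> t s 0 A ^^ Suc m) (z0, z') = Pm t s A (Suc m) (z0, z')"
      using assms
      by (simp add: Suc Pm_def autmap_eq h_w_zero_w sig_Suc mv_scaleR matrix_vector_mul_assoc algebra_simps)
  qed
qed

lemma inv_phi:
  assumes "t \<noteq> 1" "t > 0" "transpose A ** cnj_mat A = mat 1"
  shows "inv (autmap \<Theta> t s 0 A) = Qm t s A 1"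
proof (rule inv_unique_comp)
  show "autmap \<Theta> t s 0 A \<circ> Qm t s A 1 = id"
    using assms
    by (auto simp: fun_eq_iff Qm_def autmap_eq h_w_zero_w sig_def mv_scaleR matrix_vector_mul_assoc Ast_right)
  show "Qm t s A 1 \<circ> autmap \<Theta> t s 0 A = id"
    using assms
    by (auto simp: fun_eq_iff Qm_def autmap_eq h_w_zero_w sig_def mv_scaleR matrix_vector_mul_assoc Ast_left)
qed

lemma Qm_pow:
  fixes A :: "complex^'n^'n"
  assumes "t \<noteq> 1" "t > 0"
  shows "(Qm t s A 1) ^^ m = Qm t s A m"
proof (induction m)
  case 0
  show ?case by (simp add: Qm_def sig_def fun_eq_iff)
next
  case (Suc m)
  show ?case
  proof (rule ext, clarify)
    fix z0 and z' :: "complex^'n"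
    have "(Qm t s A 1 ^^ Suc m) (z0, z') = Qm t s A 1 (Qm t s A m (z0, z'))"
      by (simp only: funpow.simps comp_apply Suc.IH)
    also have "\<dots> = Qm t s A (Suc m) (z0, z')"
      using assms
      by (simp add: Qm_def sig_Suc' mv_scaleR matrix_vector_mul_assoc field_simps)
    finally show "(Qm t s A 1 ^^ Suc m) (z0, z') = Qm t s A (Suc m) (z0, z')" .
  qed
qed




lemma near_id:
  fixes \<Gamma> :: "('a::real_normed_vector \<Rightarrow> 'a) set"
  assumes "co_discrete H \<Gamma>" "id \<in> \<Gamma>"
  shows "\<exists>\<epsilon>>0. \<exists>R\<ge>0. \<forall>g\<in>\<Gamma>. (\<forall>z. norm z \<le> R \<longrightarrow> norm (g z - z) \<le> \<epsilon>) \<longrightarrow> (\<forall>x\<in>H. g x = x)"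
proof -
  from bspec[OF assms(1)[unfolded co_discrete_def] assms(2)]
  obtain P where Pf: "finite P"
    and PKU: "\<forall>(K, U)\<in>P. compact K \<and> K \<subseteq> H \<and> open U \<and> id ` K \<subseteq> U"
    and Pd: "\<forall>\<psi>\<in>\<Gamma>. (\<forall>(K, U)\<in>P. \<psi> ` K \<subseteq> U) \<longrightarrow> (\<forall>x\<in>H. \<psi> x = id x)"
    by (elim exE conjE)
  have "\<forall>p\<in>P. \<exists>q. fst q > 0 \<and> (\<forall>x\<in>fst p. ball x (fst q) \<subseteq> snd p) \<and> (\<forall>x\<in>fst p. norm x \<le> snd q)"
  proof
    fix p assume "p \<in> P"
    obtain K U where p: "p = (K, U)" by (cases p)
    have K: "compact K" "open U" "K \<subseteq> U" using PKU \<open>p \<in> P\<close> unfolding p by auto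
    obtain e where e: "e > 0" "(\<Union>x\<in>K. ball x e) \<subseteq> U"
      using compact_subset_open_imp_ball_epsilon_subset[OF K] by blast
    obtain B where B: "\<forall>x\<in>K. norm x \<le> B"
      using compact_imp_bounded[OF K(1)] unfolding bounded_iff by blast
    show "\<exists>q. fst q > 0 \<and> (\<forall>x\<in>fst p. ball x (fst q) \<subseteq> snd p) \<and> (\<forall>x\<in>fst p. norm x \<le> snd q)"
      by (rule exI[of _ "(e, B)"]) (use e B p in auto)
  qed
  then obtain q where q: "\<And>p. p \<in> P \<Longrightarrow> fst (q p) > 0 \<and> (\<forall>x\<in>fst p. ball x (fst (q p)) \<subseteq> snd p) \<and> (\<forall>x\<in>fst p. norm x \<le> snd (q p))"
    by metis
  define \<epsilon> where "\<epsilon> = Min (insert 1 ((\<lambda>p. fst (q p)) ` P)) / 2"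
  define R where "R = Max (insert 0 ((\<lambda>p. snd (q p)) ` P))"
  have "0 < Min (insert 1 ((\<lambda>p. fst (q p)) ` P))" using Pf q by (subst Min_gr_iff) auto
  then have \<epsilon>0: "\<epsilon> > 0" unfolding \<epsilon>_def by simp
  have \<epsilon>le: "\<epsilon> < fst (q p)" if "p \<in> P" for p
  proof -
    have "Min (insert 1 ((\<lambda>p. fst (q p)) ` P)) \<le> fst (q p)" using Pf that by (intro Min_le) auto
    then show ?thesis unfolding \<epsilon>_def using q[OF that] by linarith
  qed
  have Rle: "snd (q p) \<le> R" if "p \<in> P" for p
    unfolding R_def using Pf that by (intro Max_ge) auto
  have R0: "R \<ge> 0" unfolding R_def using Pf by (intro Max_ge) auto
  have "\<forall>g\<in>\<Gamma>. (\<forall>z. norm z \<le> R \<longrightarrow> norm (g z - z) \<le> \<epsilon>) \<longrightarrow> (\<forall>x\<in>H. g x = x)"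
  proof (intro ballI impI)
    fix g x assume g: "g \<in> \<Gamma>" and close: "\<forall>z. norm z \<le> R \<longrightarrow> norm (g z - z) \<le> \<epsilon>" and x: "x \<in> H"
    have "\<forall>(K, U)\<in>P. g ` K \<subseteq> U"
    proof (clarify)
      fix K U y assume KU: "(K, U) \<in> P" and y: "y \<in> K"
      have "norm y \<le> R" using q[OF KU] Rle[OF KU] y by force
      then have "norm (g y - y) \<le> \<epsilon>" using close by blast
      then have "g y \<in> ball y (fst (q (K, U)))" using \<epsilon>le[OF KU] by (simp add: dist_norm norm_minus_commute)
      moreover have "ball y (fst (q (K, U))) \<subseteq> U" using q[OF KU] y by simp
      ultimately show "g y \<in> U" by blast
    qed
    then show "g x = x" using Pd g x by simp
  qed
  then show ?thesis using \<epsilon>0 R0 by blast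
qed

context
  fixes \<Theta> :: "complex^'n^'n" and t s a b :: real and A B :: "complex^'n^'n" and w :: "complex^'n"
  assumes t0: "0 < t" and t1: "t < 1" and a0: "0 < a"
    and uA: "transpose A ** cnj_mat A = mat 1" and uB: "transpose B ** cnj_mat B = mat 1"
begin

definition cm :: "nat \<Rightarrow> complex \<times> (complex^'n) \<Rightarrow> complex \<times> (complex^'n)" where
  "cm m = Pm t s A m \<circ> autmap \<Theta> a b w B \<circ> Qm t s A m"

lemma isoA: "norm (mpow A m *v v) = norm v"
  by (rule mpow_isom) (rule unit_norm[OF uA])

lemma isoA': "norm (mpow (Ast A) m *v v) = norm v"
  by (rule mpow_isom) (rule Ast_norm[OF uA])

lemma isoB: "norm (B *v v) = norm v"
  by (rule unit_norm[OF uB])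

lemma tpow_key: "t^m * (1 / sqrt t)^m = sqrt t ^ m"
proof -
  have "t * (1 / sqrt t) = sqrt t"
    using t0 by (metis real_div_sqrt less_imp_le times_divide_eq_right mult_1_right)
  then show ?thesis by (metis power_mult_distrib)
qed

lemma cm_formula:
  "cm m (z0, z') =
    (complex_of_real a * z0 + \<i> * complex_of_real ((1 - a) * sig t s m + b * t^m)
       - complex_of_real (t^m * (norm w)\<^sup>2)
       + complex_of_real (sqrt t ^ m) * lh \<Theta> w (mpow (Ast A) m *v z'),
     sqrt a *\<^sub>R (mpow A m *v (B *v (mpow (Ast A) m *v z'))) + sqrt t ^ m *\<^sub>R (mpow A m *v w))"
proof -
  have k: "complex_of_real (t^m) * complex_of_real ((1 / sqrt t)^m) = complex_of_real (sqrt t ^ m)"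
    by (simp only: of_real_mult[symmetric] tpow_key)
  have k2: "sqrt t ^ m * (1 / sqrt t)^m = 1"
    using t0 by (simp add: power_mult_distrib[symmetric])
  have tm: "complex_of_real (t^m) \<noteq> 0" using t0 by simp
  show ?thesis
    unfolding cm_def comp_def Qm_def Pm_def
    apply (simp add: autmap_eq h_w_lh lh_scale mv_scaleR algebra_simps)
    apply (intro conjI)
    subgoal using k tm by (simp add: field_simps)
    subgoal using k2 by (simp add: mult.assoc[symmetric])
    done
qed

lemma cm_diff:
  "cm m (x0, x') - cm m (y0, y') =
    (complex_of_real a * (x0 - y0) + complex_of_real (sqrt t ^ m) * lh \<Theta> w (mpow (Ast A) m *v (x' - y')),
     sqrt a *\<^sub>R (mpow A m *v (B *v (mpow (Ast A) m *v (x' - y')))))"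
  by (simp add: cm_formula lh_diff matrix_vector_mult_diff_distrib algebra_simps)

lemma rpow_le1: "sqrt t ^ m \<le> 1"
  using t0 t1 by (simp add: power_le_one)

lemma cm_rev: "\<exists>K>0. \<forall>m x y. norm (x - y) \<le> K * norm (cm m x - cm m y)"
proof -
  obtain C where C0: "C \<ge> 0" and C: "\<And>y. norm (lh \<Theta> w y) \<le> C * norm y"
    using lh_bound[of \<Theta> w] by blast
  define K where "K = 1 / a + (C / a + 1) / sqrt a"
  have K0: "K > 0" unfolding K_def using a0 C0 by (simp add: add_pos_nonneg)
  have "norm (x - y) \<le> K * norm (cm m x - cm m y)" for m x y
  proof -
    obtain x0 x' where x: "x = (x0, x')" by (cases x)
    obtain y0 y' where y: "y = (y0, y')" by (cases y)
    define D0 where "D0 = complex_of_real a * (x0 - y0) + complex_of_real (sqrt t ^ m) * lh \<Theta> w (mpow (Ast A) m *v (x' - y'))"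
    define D' where "D' = sqrt a *\<^sub>R (mpow A m *v (B *v (mpow (Ast A) m *v (x' - y'))))"
    have dd: "cm m x - cm m y = (D0, D')" unfolding x y D0_def D'_def by (rule cm_diff)
    have nD': "norm D' = sqrt a * norm (x' - y')"
      unfolding D'_def using a0 by (simp add: isoA isoA' isoB)
    have l: "norm (complex_of_real (sqrt t ^ m) * lh \<Theta> w (mpow (Ast A) m *v (x' - y'))) \<le> C * norm (x' - y')"
    proof -
      have "norm (complex_of_real (sqrt t ^ m) * lh \<Theta> w (mpow (Ast A) m *v (x' - y')))
          = sqrt t ^ m * norm (lh \<Theta> w (mpow (Ast A) m *v (x' - y')))"
        using t0 by (simp add: norm_mult norm_power)
      also have "\<dots> \<le> 1 * (C * norm (x' - y'))"
        using rpow_le1 C[of "mpow (Ast A) m *v (x' - y')"] by (intro mult_mono) (simp_all add: isoA')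
      finally show ?thesis by simp
    qed
    have "a * norm (x0 - y0) = norm (complex_of_real a * (x0 - y0))"
      using a0 by (simp add: norm_mult)
    also have "\<dots> \<le> norm D0 + C * norm (x' - y')"
      using l norm_triangle_ineq4[of D0 "complex_of_real (sqrt t ^ m) * lh \<Theta> w (mpow (Ast A) m *v (x' - y'))"]
      unfolding D0_def by (simp add: algebra_simps)
    finally have n0: "a * norm (x0 - y0) \<le> norm D0 + C * norm (x' - y')" .
    have "norm (x - y) \<le> norm (x0 - y0) + norm (x' - y')"
      unfolding x y using norm_Pair_le by simp
    also have "\<dots> \<le> (norm D0 + C * norm (x' - y')) / a + norm (x' - y')"
      using n0 a0 by (simp add: field_simps)
    also have "\<dots> = norm D0 / a + (C / a + 1) / sqrt a * norm D'"
      using a0 nD' by (simp add: field_simps)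
    also have "\<dots> \<le> K * norm (D0, D')"
    proof -
      have "norm D0 / a \<le> 1 / a * norm (D0, D')"
        using norm_fst_le[of D0 D'] a0 by (simp add: divide_right_mono)
      moreover have "(C / a + 1) / sqrt a * norm D' \<le> (C / a + 1) / sqrt a * norm (D0, D')"
        using norm_snd_le[of D' D0] a0 C0 by (intro mult_left_mono) (simp_all add: norm_snd_le)
      ultimately show ?thesis unfolding K_def by (simp add: algebra_simps)
    qed
    finally show ?thesis using dd by simp
  qed
  then show ?thesis using K0 by blast
qed

lemma tri4: "norm (\<i> * complex_of_real X - complex_of_real Y + (L - L')) \<le> \<bar>X\<bar> + \<bar>Y\<bar> + norm L + norm L'"
proof -
  have 1: "norm (\<i> * complex_of_real X - complex_of_real Y + (L - L')) \<le> norm (\<i> * complex_of_real X - complex_of_real Y) + norm (L - L')"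
    by (rule norm_triangle_ineq)
  have 2: "norm (\<i> * complex_of_real X - complex_of_real Y) \<le> norm (\<i> * complex_of_real X) + norm (complex_of_real Y)"
    by (rule norm_triangle_ineq4)
  have 3: "norm (L - L') \<le> norm L + norm L'" by (rule norm_triangle_ineq4)
  have 4: "norm (\<i> * complex_of_real X) = \<bar>X\<bar>" by (simp add: norm_mult)
  have 5: "norm (complex_of_real Y) = \<bar>Y\<bar>" by simp
  show ?thesis using 1 2 3 4 5 by linarith
qed

lemma tpow_le: "N \<le> m \<Longrightarrow> t ^ m \<le> sqrt t ^ N"
proof -
  assume "N \<le> m"
  have r0: "0 \<le> sqrt t" "sqrt t \<le> 1" using t0 t1 by auto
  have "t ^ m = (sqrt t ^ m) * (sqrt t ^ m)"
    using t0 by (simp add: power_mult_distrib[symmetric])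
  also have "\<dots> \<le> sqrt t ^ m * 1" using r0 by (intro mult_left_mono) (simp_all add: power_le_one)
  also have "\<dots> \<le> sqrt t ^ N" using r0 \<open>N \<le> m\<close> by (simp add: power_decreasing)
  finally show ?thesis .
qed

lemma rpow_le: "N \<le> m \<Longrightarrow> sqrt t ^ m \<le> sqrt t ^ N"
  using t0 t1 by (simp add: power_decreasing)

lemma mdiff_le:
  assumes "norm (M - M') \<le> \<delta>" "norm v \<le> R"
  shows "norm ((M::complex^'n^'n) *v v - M' *v v) \<le> real (CARD('n) * CARD('n)) * \<delta> * R"
proof -
  have "norm (M *v v - M' *v v) = norm ((M - M') *v v)" by (simp add: matrix_vector_mult_diff_rdistrib)
  also have "\<dots> \<le> real (CARD('n) * CARD('n)) * norm (M - M') * norm v" by (rule mv_norm_le)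
  also have "\<dots> \<le> real (CARD('n) * CARD('n)) * \<delta> * R"
    using assms by (intro mult_mono) (simp_all add: order_trans[OF norm_ge_zero])
  finally show ?thesis .
qed

lemma cm_close:
  "\<exists>E. \<forall>N m m' \<delta> z. N \<le> m \<longrightarrow> N \<le> m' \<longrightarrow> norm (mpow A m - mpow A m') \<le> \<delta> \<longrightarrow>
      norm (mpow (Ast A) m - mpow (Ast A) m') \<le> \<delta> \<longrightarrow> norm z \<le> R \<longrightarrow>
      norm (cm m z - cm m' z) \<le> E * sqrt t ^ N + sqrt a * (2 * real (CARD('n) * CARD('n)) * \<delta> * R)"
proof -
  obtain C where C0: "C \<ge> 0" and C: "\<And>y. norm (lh \<Theta> w y) \<le> C * norm y"
    using lh_bound[of \<Theta> w] by blast
  define E where "E = 2 * \<bar>1 - a\<bar> * \<bar>s\<bar> / (1 - t) + 2 * \<bar>b\<bar> + 2 * (norm w)\<^sup>2 + 2 * C * R + 2 * norm w"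
  define \<kappa> where "\<kappa> = real (CARD('n) * CARD('n))"
  have "norm (cm m z - cm m' z) \<le> E * sqrt t ^ N + sqrt a * (2 * \<kappa> * \<delta> * R)"
    if mN: "N \<le> m" and m'N: "N \<le> m'" and dA: "norm (mpow A m - mpow A m') \<le> \<delta>"
      and dB: "norm (mpow (Ast A) m - mpow (Ast A) m') \<le> \<delta>" and zR: "norm z \<le> R" for N m m' \<delta> z
  proof -
    obtain z0 z' where z: "z = (z0, z')" by (cases z)
    have z'R: "norm z' \<le> R" using zR norm_snd_le[of z' z0] unfolding z by simp
    define r where "r = sqrt t"
    have r0: "0 \<le> r" and r1: "r \<le> 1" using t0 t1 by (auto simp: r_def)
    have rm: "r^m \<le> r^N" "r^m' \<le> r^N" using rpow_le mN m'N by (auto simp: r_def)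
    have tm: "t^m \<le> r^N" "t^m' \<le> r^N" using tpow_le mN m'N by (auto simp: r_def)
    have tm0: "0 \<le> t^m" "0 \<le> t^m'" using t0 by auto
    have rN0: "0 \<le> r^N" using r0 by simp
    define X where "X = (1 - a) * (sig t s m - sig t s m') + b * (t^m - t^m')"
    define Y where "Y = (t^m - t^m') * (norm w)\<^sup>2"
    define L where "L = complex_of_real (r ^ m) * lh \<Theta> w (mpow (Ast A) m *v z')"
    define L' where "L' = complex_of_real (r ^ m') * lh \<Theta> w (mpow (Ast A) m' *v z')"
    define V where "V = sqrt a *\<^sub>R (mpow A m *v (B *v (mpow (Ast A) m *v z'))
                     - mpow A m' *v (B *v (mpow (Ast A) m' *v z')))"
    define W where "W = r^m *\<^sub>R (mpow A m *v w) - r^m' *\<^sub>R (mpow A m' *v w)"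
    have dif: "cm m z - cm m' z = (\<i> * complex_of_real X - complex_of_real Y + (L - L'), V + W)"
      unfolding z cm_formula X_def Y_def L_def L'_def V_def W_def r_def
      by (simp add: algebra_simps scaleR_diff_right)
    have dt: "\<bar>t^m - t^m'\<bar> \<le> 2 * r^N" using tm tm0 by linarith
    have ds: "\<bar>sig t s m - sig t s m'\<bar> \<le> \<bar>s\<bar> * (2 * r^N) / (1 - t)"
    proof -
      have "sig t s m - sig t s m' = (s * (1 - t^m) - s * (1 - t^m')) / (1 - t)"
        unfolding sig_def by (rule diff_divide_distrib[symmetric])
      also have "\<dots> = s * (t^m' - t^m) / (1 - t)" by (simp add: algebra_simps)
      finally have "sig t s m - sig t s m' = s * (t^m' - t^m) / (1 - t)" .
      then have "\<bar>sig t s m - sig t s m'\<bar> = \<bar>s\<bar> * \<bar>t^m' - t^m\<bar> / (1 - t)"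
        using t1 by (simp add: abs_mult)
      also have "\<dots> \<le> \<bar>s\<bar> * (2 * r^N) / (1 - t)"
        using dt t1 by (intro divide_right_mono mult_left_mono) auto
      finally show ?thesis .
    qed
    have nX: "\<bar>X\<bar> \<le> (2 * \<bar>1 - a\<bar> * \<bar>s\<bar> / (1 - t) + 2 * \<bar>b\<bar>) * r^N"
    proof -
      have "\<bar>X\<bar> \<le> \<bar>1 - a\<bar> * \<bar>sig t s m - sig t s m'\<bar> + \<bar>b\<bar> * \<bar>t^m - t^m'\<bar>"
        unfolding X_def by (metis abs_mult abs_triangle_ineq)
      also have "\<dots> \<le> \<bar>1 - a\<bar> * (\<bar>s\<bar> * (2 * r^N) / (1 - t)) + \<bar>b\<bar> * (2 * r^N)"
        using ds dt by (intro add_mono mult_left_mono) auto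
      also have "\<dots> = (2 * \<bar>1 - a\<bar> * \<bar>s\<bar> / (1 - t) + 2 * \<bar>b\<bar>) * r^N"
        by (simp add: field_simps)
      finally show ?thesis .
    qed
    have nY: "\<bar>Y\<bar> \<le> 2 * (norm w)\<^sup>2 * r^N"
    proof -
      have "\<bar>Y\<bar> = (norm w)\<^sup>2 * \<bar>t ^ m - t ^ m'\<bar>" unfolding Y_def by (simp add: abs_mult)
      also have "\<dots> \<le> (norm w)\<^sup>2 * (2 * r^N)" using dt by (intro mult_left_mono) auto
      finally show ?thesis by (simp add: algebra_simps)
    qed
    have nL: "norm L \<le> C * R * r^N"
    proof -
      have "norm L = r^m * norm (lh \<Theta> w (mpow (Ast A) m *v z'))"
        unfolding L_def using r0 by (simp add: norm_mult norm_power)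
      also have "\<dots> \<le> r^N * (C * R)"
        using rm r0 C[of "mpow (Ast A) m *v z'"] z'R C0
        by (intro mult_mono) (auto simp: isoA' intro: order_trans mult_left_mono)
      finally show ?thesis by (simp add: algebra_simps)
    qed
    have nL': "norm L' \<le> C * R * r^N"
    proof -
      have "norm L' = r^m' * norm (lh \<Theta> w (mpow (Ast A) m' *v z'))"
        unfolding L'_def using r0 by (simp add: norm_mult norm_power)
      also have "\<dots> \<le> r^N * (C * R)"
        using rm r0 C[of "mpow (Ast A) m' *v z'"] z'R C0
        by (intro mult_mono) (auto simp: isoA' intro: order_trans mult_left_mono)
      finally show ?thesis by (simp add: algebra_simps)
    qed
    have n1: "norm (\<i> * complex_of_real X - complex_of_real Y + (L - L'))
        \<le> (2 * \<bar>1 - a\<bar> * \<bar>s\<bar> / (1 - t) + 2 * \<bar>b\<bar> + 2 * (norm w)\<^sup>2 + 2 * C * R) * r^N"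
    proof -
      have "norm (\<i> * complex_of_real X - complex_of_real Y + (L - L')) \<le> \<bar>X\<bar> + \<bar>Y\<bar> + norm L + norm L'"
        by (rule tri4)
      then show ?thesis using nX nY nL nL' by (simp add: algebra_simps)
    qed
    have nV: "norm V \<le> sqrt a * (2 * \<kappa> * \<delta> * R)"
    proof -
      define u where "u = B *v (mpow (Ast A) m *v z')"
      define u' where "u' = B *v (mpow (Ast A) m' *v z')"
      have uR: "norm u \<le> R" unfolding u_def using z'R by (simp add: isoB isoA')
      have e1: "norm (mpow A m *v u - mpow A m' *v u) \<le> \<kappa> * \<delta> * R"
        unfolding \<kappa>_def by (rule mdiff_le[OF dA uR])
      have "norm (mpow A m' *v u - mpow A m' *v u') = norm (u - u')"
        by (metis isoA matrix_vector_mult_diff_distrib)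
      also have "\<dots> = norm (mpow (Ast A) m *v z' - mpow (Ast A) m' *v z')"
        unfolding u_def u'_def by (metis isoB matrix_vector_mult_diff_distrib)
      also have "\<dots> \<le> \<kappa> * \<delta> * R" unfolding \<kappa>_def by (rule mdiff_le[OF dB z'R])
      finally have e2: "norm (mpow A m' *v u - mpow A m' *v u') \<le> \<kappa> * \<delta> * R" .
      have "norm (mpow A m *v u - mpow A m' *v u') \<le> norm (mpow A m *v u - mpow A m' *v u) + norm (mpow A m' *v u - mpow A m' *v u')"
        by (rule order_trans[OF _ norm_triangle_ineq]) simp
      then have "norm (mpow A m *v u - mpow A m' *v u') \<le> 2 * \<kappa> * \<delta> * R" using e1 e2 by simp
      then show ?thesis unfolding V_def u_def[symmetric] u'_def[symmetric] using a0
        by (simp add: mult_left_mono)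
    qed
    have nW: "norm W \<le> 2 * norm w * r^N"
    proof -
      have "norm W \<le> norm (r^m *\<^sub>R (mpow A m *v w)) + norm (r^m' *\<^sub>R (mpow A m' *v w))"
        unfolding W_def by (rule norm_triangle_ineq4)
      also have "\<dots> = r^m * norm w + r^m' * norm w" using r0 by (simp add: isoA)
      also have "\<dots> \<le> r^N * norm w + r^N * norm w" using rm by (intro add_mono mult_right_mono) auto
      finally show ?thesis by simp
    qed
    have "norm (cm m z - cm m' z) \<le> norm (\<i> * complex_of_real X - complex_of_real Y + (L - L')) + norm (V + W)"
      unfolding dif by (rule norm_Pair_le)
    also have "\<dots> \<le> norm (\<i> * complex_of_real X - complex_of_real Y + (L - L')) + norm V + norm W"
      using norm_triangle_ineq[of V W] by simp
    also have "\<dots> \<le> E * r^N + sqrt a * (2 * \<kappa> * \<delta> * R)"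
      using n1 nV nW unfolding E_def by (simp add: algebra_simps)
    finally show ?thesis unfolding r_def .
  qed
  then show ?thesis unfolding \<kappa>_def by blast
qed

lemma Aut_surj: "f \<in> Aut \<Theta> \<Longrightarrow> surj f"
  unfolding Aut_def using autmap_surj U_unit by blast

lemma main_step:
  fixes \<Gamma> :: "(complex \<times> (complex^'n) \<Rightarrow> complex \<times> (complex^'n)) set"
  assumes G: "is_subgroup_Aut \<Theta> \<Gamma>" and D: "co_discrete siegel \<Gamma>"
    and phi: "autmap \<Theta> t s 0 A \<in> \<Gamma>" and psi: "autmap \<Theta> a b w B \<in> \<Gamma>"
  shows "w = 0 \<and> b * (1 - t) = s * (1 - a)"
proof -
  have Gsub: "\<Gamma> \<subseteq> Aut \<Theta>" "id \<in> \<Gamma>" "\<And>f g. f \<in> \<Gamma> \<Longrightarrow> g \<in> \<Gamma> \<Longrightarrow> f \<circ> g \<in> \<Gamma>"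
    "\<And>f. f \<in> \<Gamma> \<Longrightarrow> inv f \<in> \<Gamma>"
    using G unfolding is_subgroup_Aut_def by auto
  have pow: "f ^^ m \<in> \<Gamma>" if "f \<in> \<Gamma>" for f m
  proof (induction m)
    case 0
    show ?case by (simp only: funpow.simps(1) Gsub(2))
  next
    case (Suc m)
    show ?case by (simp only: funpow.simps(2)) (rule Gsub(3)[OF that Suc.IH])
  qed
  have tne: "t \<noteq> 1" using t1 by simp
  have P: "Pm t s A m \<in> \<Gamma>" for m
    using pow[OF phi, of m] by (simp only: phi_pow[OF tne t0])
  have Q: "Qm t s A m \<in> \<Gamma>" for m
    using pow[OF Gsub(4)[OF phi], of m] by (simp only: inv_phi[OF tne t0 uA] Qm_pow[OF tne t0])
  have cmG: "cm m \<in> \<Gamma>" for m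
    unfolding cm_def by (intro Gsub(3) P Q psi)
  have cm_inv: "cm m (inv (cm m) y) = y" for m y
    using Aut_surj[of "cm m"] cmG[of m] Gsub(1) by (auto intro: surj_f_inv_f)
  obtain \<epsilon> R where \<epsilon>0: "\<epsilon> > 0" and R0: "R \<ge> 0"
    and nid: "\<forall>g\<in>\<Gamma>. (\<forall>z. norm z \<le> R \<longrightarrow> norm (g z - z) \<le> \<epsilon>) \<longrightarrow> (\<forall>x\<in>siegel. g x = x)"
    using near_id[OF D Gsub(2)] by blast
  obtain K where K0: "K > 0" and K: "\<And>m x y. norm (x - y) \<le> K * norm (cm m x - cm m y)"
    using cm_rev by blast
  define \<kappa> where "\<kappa> = real (CARD('n) * CARD('n))"
  obtain E where E: "\<And>N m m' \<delta> z. N \<le> m \<Longrightarrow> N \<le> m' \<Longrightarrow> norm (mpow A m - mpow A m') \<le> \<delta> \<Longrightarrow>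
      norm (mpow (Ast A) m - mpow (Ast A) m') \<le> \<delta> \<Longrightarrow> norm z \<le> R \<Longrightarrow>
      norm (cm m z - cm m' z) \<le> E * sqrt t ^ N + sqrt a * (2 * \<kappa> * \<delta> * R)"
    using cm_close[of R] unfolding \<kappa>_def by blast
  have c1: "1 \<le> CARD('n)" using zero_less_card_finite[where 'a='n] by linarith
  have "1 * 1 \<le> CARD('n) * CARD('n)" by (rule mult_le_mono[OF c1 c1])
  then have "real 1 \<le> real (CARD('n) * CARD('n))" by (simp only: of_nat_le_iff mult_1)
  then have \<kappa>1: "\<kappa> \<ge> 1" unfolding \<kappa>_def by (simp only: of_nat_1)
  define \<delta> where "\<delta> = \<epsilon> / (4 * K * sqrt a * \<kappa> * (R + 1))"
  have \<delta>0: "\<delta> > 0" unfolding \<delta>_def using \<epsilon>0 K0 a0 \<kappa>1 R0 by simp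
  obtain N where N: "sqrt t ^ N < \<epsilon> / (2 * K * (\<bar>E\<bar> + 1))"
    using real_arch_pow_inv[of "\<epsilon> / (2 * K * (\<bar>E\<bar> + 1))" "sqrt t"] \<epsilon>0 K0 t1 by auto
  define X where "X m = (mpow A m, mpow (Ast A) m)" for m
  have "bounded (range X)"
    unfolding bounded_iff
  proof (intro exI ballI)
    fix x assume "x \<in> range X"
    then obtain m where x: "x = X m" by blast
    have "norm x \<le> norm (mpow A m) + norm (mpow (Ast A) m)" unfolding x X_def by (rule norm_Pair_le)
    also have "\<dots> \<le> \<kappa> + \<kappa>" unfolding \<kappa>_def
      by (intro add_mono isom_entries_bound isoA isoA')
    finally show "norm x \<le> 2 * \<kappa>" by simp
  qed
  then obtain l \<sigma> where sm: "strict_mono (\<sigma> :: nat \<Rightarrow> nat)" and lim: "(X \<circ> \<sigma>) \<longlonglongrightarrow> l"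
    using bounded_imp_convergent_subsequence by blast
  obtain M where M: "\<And>j. j \<ge> M \<Longrightarrow> dist ((X \<circ> \<sigma>) j) l < \<delta> / 2"
    using lim \<delta>0 unfolding lim_sequentially by (metis half_gt_zero)
  define m where "m = \<sigma> (M + N)"
  define m' where "m' = \<sigma> (Suc (M + N))"
  have mN: "N \<le> m" unfolding m_def using seq_suble[OF sm, of "M + N"] by simp
  have m'N: "N \<le> m'" unfolding m'_def using seq_suble[OF sm, of "Suc (M + N)"] by simp
  have mm': "m < m'" unfolding m_def m'_def using sm by (simp add: strict_mono_def)
  have "dist (X m) (X m') < \<delta>"
  proof -
    have "dist (X m) l < \<delta> / 2" using M[of "M + N"] unfolding m_def by simp
    moreover have "dist (X m') l < \<delta> / 2" using M[of "Suc (M + N)"] unfolding m'_def by simp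
    ultimately show ?thesis using dist_triangle_half_l by blast
  qed
  then have dX: "norm (X m - X m') < \<delta>" by (simp add: dist_norm)
  have dA: "norm (mpow A m - mpow A m') \<le> \<delta>"
    using dX norm_fst_le[of "mpow A m - mpow A m'" "mpow (Ast A) m - mpow (Ast A) m'"]
    unfolding X_def by simp
  have dB: "norm (mpow (Ast A) m - mpow (Ast A) m') \<le> \<delta>"
    using dX norm_snd_le[of "mpow (Ast A) m - mpow (Ast A) m'" "mpow A m - mpow A m'"]
    unfolding X_def by simp
  define g where "g = inv (cm m) \<circ> cm m'"
  have gG: "g \<in> \<Gamma>" unfolding g_def by (intro Gsub(3) Gsub(4) cmG)
  have gclose: "norm (g z - z) \<le> \<epsilon>" if zR: "norm z \<le> R" for z
  proof -
    have "norm (g z - z) \<le> K * norm (cm m (g z) - cm m z)" by (rule K)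
    also have "cm m (g z) = cm m' z" unfolding g_def by (simp add: cm_inv)
    also have "norm (cm m' z - cm m z) = norm (cm m z - cm m' z)" by (rule norm_minus_commute)
    also have "K * \<dots> \<le> K * (E * sqrt t ^ N + sqrt a * (2 * \<kappa> * \<delta> * R))"
      using E[OF mN m'N dA dB zR] K0 by simp
    also have "\<dots> \<le> \<epsilon>"
    proof -
      have rN0: "0 \<le> sqrt t ^ N" using t0 by simp
      have "K * (E * sqrt t ^ N) \<le> K * ((\<bar>E\<bar> + 1) * sqrt t ^ N)"
        using K0 rN0 by (intro mult_left_mono mult_right_mono) auto
      also have "\<dots> \<le> K * ((\<bar>E\<bar> + 1) * (\<epsilon> / (2 * K * (\<bar>E\<bar> + 1))))"
        using K0 N by (intro mult_left_mono) auto
      also have "\<dots> = \<epsilon> / 2"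
      proof -
        have hpos: "0 < K * 2 + K * (\<bar>E\<bar> * 2)" using K0 by (simp add: add_pos_nonneg)
        then show ?thesis using K0 by (simp add: field_simps)
      qed
      finally have h1: "K * (E * sqrt t ^ N) \<le> \<epsilon> / 2" .
      have "K * (sqrt a * (2 * \<kappa> * \<delta> * R)) = \<epsilon> / 2 * (R / (R + 1))"
      proof -
        have hpos2: "0 < K * (\<kappa> * (sqrt a * 4)) + K * (R * (\<kappa> * (sqrt a * 4)))"
          using K0 a0 \<kappa>1 R0 by (intro add_pos_nonneg mult_pos_pos mult_nonneg_nonneg) auto
        show ?thesis unfolding \<delta>_def using K0 a0 \<kappa>1 R0 hpos2 by (simp add: field_simps)
      qed
      also have "\<dots> \<le> \<epsilon> / 2 * 1" using \<epsilon>0 R0 by (intro mult_left_mono) auto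
      finally have h2: "K * (sqrt a * (2 * \<kappa> * \<delta> * R)) \<le> \<epsilon> / 2" by simp
      show ?thesis using h1 h2 by (simp add: distrib_left)
    qed
    finally show ?thesis .
  qed
  have x0: "(-1, 0) \<in> (siegel :: (complex \<times> (complex^'n)) set)" by (simp add: siegel_def)
  have "g (-1, 0) = (-1, 0)" using nid gG gclose x0 by blast
  then have eq: "cm m' (-1, 0) = cm m (-1, 0)" by (metis cm_inv comp_apply g_def)
  have lh0: "lh \<Theta> w 0 = 0" by (simp add: lh_def h_w_zero_z)
  define Xm where "Xm k = (1 - a) * sig t s k + b * t^k" for k
  have eq1: "- complex_of_real a + \<i> * complex_of_real (Xm m') - complex_of_real (t^m' * (norm w)\<^sup>2)
      = - complex_of_real a + \<i> * complex_of_real (Xm m) - complex_of_real (t^m * (norm w)\<^sup>2)"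
    and eq2: "sqrt t ^ m' *\<^sub>R (mpow A m' *v w) = sqrt t ^ m *\<^sub>R (mpow A m *v w)"
    using eq by (simp_all add: cm_formula lh0 Xm_def)
  have XX: "Xm m' = Xm m" using arg_cong[OF eq1, of Im] by simp
  have "sqrt t ^ m' * norm w = sqrt t ^ m * norm w"
    using arg_cong[OF eq2, of norm] t0 by (simp add: isoA)
  moreover have "sqrt t ^ m' < sqrt t ^ m"
    using mm' t0 t1 by (intro power_strict_decreasing) auto
  ultimately have w0: "w = 0" by (metis mult_right_cancel nless_le norm_eq_zero)
  have "t ^ m' < t ^ m"
    using mm' t0 t1 by (intro power_strict_decreasing) auto
  then have tt: "t ^ m' \<noteq> t ^ m" by simp
  have e: "(1 - a) * (s * (1 - t^m')) + b * t^m' * (1 - t) = (1 - a) * (s * (1 - t^m)) + b * t^m * (1 - t)"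
    using XX t1 unfolding Xm_def sig_def by (simp add: field_simps)
  have id: "(T - T') * (b * (1 - t) - s * (1 - a)) =
      ((1 - a) * (s * (1 - T)) + b * T * (1 - t)) - ((1 - a) * (s * (1 - T')) + b * T' * (1 - t))"
    for T T' :: real by (simp add: algebra_simps)
  have "(t^m - t^m') * (b * (1 - t) - s * (1 - a)) = 0" unfolding id[of "t^m" "t^m'"] using e by simp
  then have "b * (1 - t) = s * (1 - a)" using tt by simp
  then show ?thesis using w0 by simp
qed

end



theorem mainTheorem3:
  fixes \<Theta> :: "complex^'n^'n"
    and \<Gamma> :: "(complex \<times> (complex^'n) \<Rightarrow> complex \<times> (complex^'n)) set"
    and t s :: real and A :: "complex^'n^'n"
  assumes "skew_sym \<Theta>" and "\<Theta> \<noteq> 0"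
    and "is_subgroup_Aut \<Theta> \<Gamma>" and "co_discrete siegel \<Gamma>"
    and "0 < t" and "t < 1" and "A \<in> U_Theta \<Theta>"
    and "autmap \<Theta> t s 0 A \<in> \<Gamma>"
  shows "\<forall>\<psi>\<in>\<Gamma>. \<exists>a b B. a > 0 \<and> B \<in> U_Theta \<Theta> \<and> \<psi> = autmap \<Theta> a b 0 B \<and>
           b * (1 - t) = s * (1 - a) \<and> (a \<noteq> 1 \<longrightarrow> b / (1 - a) = s / (1 - t))"
proof
  fix \<psi> assume psi: "\<psi> \<in> \<Gamma>"
  have uA: "transpose A ** cnj_mat A = mat 1" using assms(7) by (rule U_unit)
  have "\<psi> \<in> Aut \<Theta>" using assms(3) psi unfolding is_subgroup_Aut_def by blast
  then obtain a b w B where a0: "a > 0" and B: "B \<in> U_Theta \<Theta>" and psi_eq: "\<psi> = autmap \<Theta> a b w B"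
    unfolding Aut_def by blast
  have wb: "w = 0 \<and> b * (1 - t) = s * (1 - a)"
    using main_step[OF assms(5) assms(6) a0 uA U_unit[OF B] assms(3) assms(4) assms(8)] psi psi_eq by blast
  have last: "a \<noteq> 1 \<longrightarrow> b / (1 - a) = s / (1 - t)"
  proof
    assume "a \<noteq> 1"
    then have "1 - a \<noteq> 0" "1 - t \<noteq> 0" using assms(6) by auto
    then show "b / (1 - a) = s / (1 - t)" using wb by (simp add: field_simps)
  qed
  show "\<exists>a b B. a > 0 \<and> B \<in> U_Theta \<Theta> \<and> \<psi> = autmap \<Theta> a b 0 B \<and>
           b * (1 - t) = s * (1 - a) \<and> (a \<noteq> 1 \<longrightarrow> b / (1 - a) = s / (1 - t))"
    using a0 B psi_eq wb last by blast
qed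

end
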